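(* Let $n$ be a positive integer and let $\mathcal F$ be an $\mathcal N$-saturated family of subsets of $[n]$. Let $\mathcal G$ be a component of $\mathcal F$. If $T$ is a maximal element of $\mathcal G$ and $S$ is a minimal element of $\mathcal G$ (with respect to inclusion), then $S\subseteq T$.
   Context: The poset $\mathcal N$ has four elements $a,b,c,d$ with $a<c$, $b<c$, $b<d$ and no other comparabilities (so $a,b$ are its minimal elements, $c,d$ its maximal elements; $c$ is the unique maximal element comparable to both minimal elements and $b$ the unique minimal element comparable to both maximal elements). A family $\mathcal Q$ of sets (ordered by inclusion) contains an induced copy of $\mathcal N$ if there are distinct sets in $\mathcal Q$ whose inclusion relations are exactly those of $a,b,c,d$ above. A family $\mathcal F$ of subsets of $[n]=\{1,\dots,n\}$ is $\mathcal N$-saturated if $\mathcal F$ contains no induced copy of $\mathcal N$, but for every $S\subseteq[n]$ with $S\notin\mathcal F$, the family $\mathcal F\cup\{S\}$ contains an induced copy of $\mathcal N$. A component of $\mathcal F$ is the vertex set of a connected component of the Hasse diagram (as a graph) of the poset $(\mathcal F\setminus\{\emptyset,[n]\},\subseteq)$. *)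

theory Defs
  imports Main
begin

definition has_induced_N :: "'a set set \<Rightarrow> bool" where
  "has_induced_N Q \<longleftrightarrow> (\<exists>a\<in>Q. \<exists>b\<in>Q. \<exists>c\<in>Q. \<exists>d\<in>Q.
     distinct [a, b, c, d] \<and>
     a \<subseteq> c \<and> b \<subseteq> c \<and> b \<subseteq> d \<and>
     \<not> a \<subseteq> b \<and> \<not> b \<subseteq> a \<and>
     \<not> a \<subseteq> d \<and> \<not> d \<subseteq> a \<and>
     \<not> c \<subseteq> d \<and> \<not> d \<subseteq> c \<and>
     \<not> c \<subseteq> a \<and> \<not> c \<subseteq> b \<and> \<not> d \<subseteq> b)"

definition N_saturated :: "nat \<Rightarrow> nat set set \<Rightarrow> bool" where
  "N_saturated n F \<longleftrightarrow> F \<subseteq> Pow {1..n} \<and> \<not> has_induced_N F \<and>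
     (\<forall>S. S \<subseteq> {1..n} \<longrightarrow> S \<notin> F \<longrightarrow> has_induced_N (insert S F))"

definition inner_family :: "nat \<Rightarrow> nat set set \<Rightarrow> nat set set" where
  "inner_family n F = F - {{}, {1..n}}"

definition covers :: "'a set set \<Rightarrow> 'a set \<Rightarrow> 'a set \<Rightarrow> bool" where
  "covers P x y \<longleftrightarrow> x \<in> P \<and> y \<in> P \<and> x \<subset> y \<and> \<not> (\<exists>z\<in>P. x \<subset> z \<and> z \<subset> y)"

definition hasse_adj :: "'a set set \<Rightarrow> 'a set \<Rightarrow> 'a set \<Rightarrow> bool" where
  "hasse_adj P x y \<longleftrightarrow> covers P x y \<or> covers P y x"

definition is_component_of :: "'a set set \<Rightarrow> 'a set set \<Rightarrow> bool" where
  "is_component_of G P \<longleftrightarrow> (\<exists>x\<in>P. G = {y \<in> P. (hasse_adj P)\<^sup>*\<^sup>* x y})"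

definition component :: "nat \<Rightarrow> nat set set \<Rightarrow> nat set set \<Rightarrow> bool" where
  "component n F G \<longleftrightarrow> is_component_of G (inner_family n F)"

definition is_maximal_in :: "'a set set \<Rightarrow> 'a set \<Rightarrow> bool" where
  "is_maximal_in G T \<longleftrightarrow> T \<in> G \<and> \<not> (\<exists>U\<in>G. T \<subset> U)"

definition is_minimal_in :: "'a set set \<Rightarrow> 'a set \<Rightarrow> bool" where
  "is_minimal_in G S \<longleftrightarrow> S \<in> G \<and> \<not> (\<exists>U\<in>G. U \<subset> S)"

end

theory Submission
  imports Defs
begin

definition maxP :: "'a set set \<Rightarrow> 'a set \<Rightarrow> bool" where
  "maxP P t \<longleftrightarrow> t \<in> P \<and> (\<forall>U\<in>P. t \<subseteq> U \<longrightarrow> t = U)"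

definition minP :: "'a set set \<Rightarrow> 'a set \<Rightarrow> bool" where
  "minP P t \<longleftrightarrow> t \<in> P \<and> (\<forall>U\<in>P. U \<subseteq> t \<longrightarrow> t = U)"

lemma N_lemma:
  assumes "\<not> has_induced_N P" "minP P a" "minP P b" "maxP P c" "maxP P d"
    "a \<subseteq> c" "b \<subseteq> c" "b \<subseteq> d"
  shows "a \<subseteq> d"
proof (rule ccontr)
  assume nad: "\<not> a \<subseteq> d"
  have ab: "a \<noteq> b" using nad assms(8) by auto
  have cd: "c \<noteq> d" using nad assms(6) by auto
  have P: "a \<in> P" "b \<in> P" "c \<in> P" "d \<in> P" using assms(2-5) unfolding minP_def maxP_def by auto
  have m: "\<And>U. U \<in> P \<Longrightarrow> U \<subseteq> a \<Longrightarrow> a = U" "\<And>U. U \<in> P \<Longrightarrow> U \<subseteq> b \<Longrightarrow> b = U"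
    "\<And>U. U \<in> P \<Longrightarrow> c \<subseteq> U \<Longrightarrow> c = U" "\<And>U. U \<in> P \<Longrightarrow> d \<subseteq> U \<Longrightarrow> d = U"
    using assms(2-5) unfolding minP_def maxP_def by auto
  have d1: "\<not> a \<subseteq> b" using m(2)[OF P(1)] ab by blast
  have d2: "\<not> b \<subseteq> a" using m(1)[OF P(2)] ab by blast
  have d3: "\<not> c \<subseteq> d" using m(3)[OF P(4)] cd by blast
  have d4: "\<not> d \<subseteq> c" using m(4)[OF P(3)] cd by blast
  have d5: "\<not> d \<subseteq> a" using d4 assms(6) by blast
  have d6: "\<not> c \<subseteq> a" using m(1)[OF P(3)] assms(6,7) d2 by blast
  have d7: "\<not> c \<subseteq> b" using m(2)[OF P(3)] assms(6) d1 by blast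
  have d8: "\<not> d \<subseteq> b" using d4 assms(7) by blast
  have "distinct [a, b, c, d]" using ab cd d1 d2 d3 d4 d6 d7 nad assms(6-8) by auto
  then have "has_induced_N P"
    unfolding has_induced_N_def
    using P d1 d2 d3 d4 d5 d6 d7 d8 nad assms(6-8) by blast
  then show False using assms(1) by simp
qed

lemma cover_up:
  assumes "finite P" "X \<in> P" "U \<in> P" "X \<subset> U"
  shows "\<exists>V. covers P X V"
proof -
  have "finite {V\<in>P. X \<subset> V}" "U \<in> {V\<in>P. X \<subset> V}" using assms by auto
  from finite_has_minimal2[OF this] obtain V where
    V: "V \<in> {V\<in>P. X \<subset> V}" "\<forall>b\<in>{V\<in>P. X \<subset> V}. b \<le> V \<longrightarrow> V = b" by blast
  have "covers P X V" unfolding covers_def using V assms(2) by auto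
  then show ?thesis by blast
qed

lemma cover_down:
  assumes "finite P" "X \<in> P" "U \<in> P" "U \<subset> X"
  shows "\<exists>V. covers P V X"
proof -
  have "finite {V\<in>P. V \<subset> X}" "U \<in> {V\<in>P. V \<subset> X}" using assms by auto
  from finite_has_maximal2[OF this] obtain V where
    V: "V \<in> {V\<in>P. V \<subset> X}" "\<forall>b\<in>{V\<in>P. V \<subset> X}. V \<le> b \<longrightarrow> V = b" by blast
  have "covers P V X" unfolding covers_def using V assms(2) by auto
  then show ?thesis by blast
qed

lemma hasN_mono:
  assumes "Q \<subseteq> R" "has_induced_N Q" shows "has_induced_N R"
proof -
  from assms(2) obtain a b c d where "a \<in> Q" "b \<in> Q" "c \<in> Q" "d \<in> Q" and
    h: "distinct [a, b, c, d] \<and>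
     a \<subseteq> c \<and> b \<subseteq> c \<and> b \<subseteq> d \<and>
     \<not> a \<subseteq> b \<and> \<not> b \<subseteq> a \<and>
     \<not> a \<subseteq> d \<and> \<not> d \<subseteq> a \<and>
     \<not> c \<subseteq> d \<and> \<not> d \<subseteq> c \<and>
     \<not> c \<subseteq> a \<and> \<not> c \<subseteq> b \<and> \<not> d \<subseteq> b"
    unfolding has_induced_N_def by blast
  then have "a \<in> R" "b \<in> R" "c \<in> R" "d \<in> R" using assms(1) by auto
  then show ?thesis unfolding has_induced_N_def using h by blast
qed

lemma adj_sym: "hasse_adj P x y \<Longrightarrow> hasse_adj P y x"
  unfolding hasse_adj_def by auto

lemma rt_sym: "(hasse_adj P)\<^sup>*\<^sup>* x y \<Longrightarrow> (hasse_adj P)\<^sup>*\<^sup>* y x"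
proof (induction rule: rtranclp_induct)
  case base then show ?case by simp
next
  case (step y z)
  then show ?case using adj_sym converse_rtranclp_into_rtranclp by metis
qed

theorem lemma2p1:
  fixes n :: nat and F G :: "nat set set" and S T :: "nat set"
  assumes "n \<ge> 1"
    and "N_saturated n F"
    and "component n F G"
    and "is_maximal_in G T"
    and "is_minimal_in G S"
  shows "S \<subseteq> T"
proof -
  define P where "P = inner_family n F"
  have finP: "finite P" using assms(2) unfolding P_def inner_family_def N_saturated_def
    by (meson finite_Diff finite_Pow_iff finite_atLeastAtMost finite_subset)
  have noN: "\<not> has_induced_N P"
  proof
    assume "has_induced_N P"
    then have "has_induced_N F" using hasN_mono[of P F] unfolding P_def inner_family_def by blast
    then show False using assms(2) unfolding N_saturated_def by simp
  qed
  obtain x where x: "x \<in> P" "G = {y \<in> P. (hasse_adj P)\<^sup>*\<^sup>* x y}"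
    using assms(3) unfolding component_def is_component_of_def P_def by blast
  have adjP: "\<And>y z. hasse_adj P y z \<Longrightarrow> z \<in> P"
    unfolding hasse_adj_def covers_def by auto
  have closed: "\<And>y z. y \<in> G \<Longrightarrow> hasse_adj P y z \<Longrightarrow> z \<in> G"
    using x adjP by (auto intro: rtranclp.rtrancl_into_rtrancl)
  have TG: "T \<in> G" and SG: "S \<in> G" using assms(4,5) unfolding is_maximal_in_def is_minimal_in_def by auto
  have maxT: "maxP P T"
    unfolding maxP_def
  proof (intro conjI ballI impI)
    show "T \<in> P" using TG x by auto
    fix U assume U: "U \<in> P" "T \<subseteq> U"
    show "T = U"
    proof (rule ccontr)
      assume "T \<noteq> U"
      then obtain V where "covers P T V" using cover_up[OF finP \<open>T \<in> P\<close> U(1)] U(2) by blast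
      then have "V \<in> G" "T \<subset> V" using closed[OF TG, of V] unfolding hasse_adj_def covers_def by auto
      then show False using assms(4) unfolding is_maximal_in_def by blast
    qed
  qed
  have minS: "minP P S"
    unfolding minP_def
  proof (intro conjI ballI impI)
    show "S \<in> P" using SG x by auto
    fix U assume U: "U \<in> P" "U \<subseteq> S"
    show "S = U"
    proof (rule ccontr)
      assume "S \<noteq> U"
      then obtain V where "covers P V S" using cover_down[OF finP \<open>S \<in> P\<close> U(1)] U(2) by blast
      then have "V \<in> G" "V \<subset> S" using closed[OF SG, of V] unfolding hasse_adj_def covers_def by auto
      then show False using assms(5) unfolding is_minimal_in_def by blast
    qed
  qed
  have path: "(hasse_adj P)\<^sup>*\<^sup>* S T"
  proof -
    have "(hasse_adj P)\<^sup>*\<^sup>* x S" "(hasse_adj P)\<^sup>*\<^sup>* x T" using x TG SG by auto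
    then show ?thesis using rt_sym[of P x S] rtranclp_trans[of "hasse_adj P" S x T] by blast
  qed
  have "y \<in> P \<and> (\<forall>t. maxP P t \<longrightarrow> y \<subseteq> t \<longrightarrow> S \<subseteq> t)" if "(hasse_adj P)\<^sup>*\<^sup>* S y" for y
    using that
  proof (induction rule: rtranclp_induct)
    case base
    show ?case using minS unfolding minP_def by blast
  next
    case (step y z)
    have zP: "z \<in> P" using adjP step(2) .
    show ?case
    proof (cases "covers P y z")
      case True
      then have "y \<subseteq> z" unfolding covers_def by blast
      then show ?thesis using step(3) zP by blast
    next
      case False
      then have "covers P z y" using step(2) unfolding hasse_adj_def by blast
      then have zy: "z \<subset> y" unfolding covers_def by blast
      have yP: "y \<in> P" using step(3) by blast
      have "\<forall>t. maxP P t \<longrightarrow> z \<subseteq> t \<longrightarrow> S \<subseteq> t"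
      proof (intro allI impI)
        fix t assume t: "maxP P t" "z \<subseteq> t"
        obtain t' where t': "t' \<in> P" "y \<subseteq> t'" "\<forall>b\<in>P. t' \<subseteq> b \<longrightarrow> t' = b"
          using finite_has_maximal2[OF finP yP] by blast
        have mt': "maxP P t'" using t' unfolding maxP_def by auto
        have St': "S \<subseteq> t'" using step(3) mt' t'(2) by blast
        obtain s' where s': "s' \<in> P" "s' \<subseteq> z" "\<forall>b\<in>P. b \<subseteq> s' \<longrightarrow> s' = b"
          using finite_has_minimal2[OF finP zP] by blast
        have ms': "minP P s'" using s' unfolding minP_def by auto
        show "S \<subseteq> t"
          using N_lemma[OF noN minS ms' mt' t(1) St'] s'(2) zy t'(2) t(2) by blast
      qed
      then show ?thesis using zP by blast
    qed
  qed
  then show ?thesis using path maxT by blast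
qed

end
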